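(* Let $E,E_0$ be real Banach spaces and $F,G:[a,b]\to E$ maps with $G$ continuous. Let $\Phi\subset\mathcal L(E,E_0)$ be a separating set for $E$, and assume that for each $\phi\in\Phi$ the composition $\phi\circ F:[a,b]\to E_0$ is of class $C^1$ with $(\phi\circ F)'(t)=\phi(G(t))$ for all $t\in[a,b]$. Then $F$ is of class $C^1$ and $F'(t)=G(t)$ for all $t\in[a,b]$.
   Context: $\mathcal L(E,E_0)$ denotes the bounded linear operators $E\to E_0$. A subset $\Phi\subset\mathcal L(E,E_0)$ is separating for $E$ if for every $x\in E\setminus\{0\}$ there is $\phi\in\Phi$ with $\phi(x)\neq0$. *)

theory Defs
  imports "HOL-Analysis.Analysis"
begin

definition C1_with_deriv :: "real set \<Rightarrow> (real \<Rightarrow> 'a::real_normed_vector) \<Rightarrow> (real \<Rightarrow> 'a) \<Rightarrow> bool" where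
  "C1_with_deriv S f f' \<longleftrightarrow>
     (\<forall>t\<in>S. (f has_vector_derivative f' t) (at t within S)) \<and> continuous_on S f'"

definition separating :: "('a::real_normed_vector \<Rightarrow>\<^sub>L 'b::real_normed_vector) set \<Rightarrow> bool" where
  "separating \<Phi> \<longleftrightarrow> (\<forall>x. x \<noteq> 0 \<longrightarrow> (\<exists>\<phi>\<in>\<Phi>. blinfun_apply \<phi> x \<noteq> 0))"

end

theory Submission
  imports Defs
begin

theorem lemma2p3:
  fixes F G :: "real \<Rightarrow> 'e::banach"
    and \<Phi> :: "('e \<Rightarrow>\<^sub>L 'f::banach) set"
    and a b :: real
  assumes "continuous_on {a..b} G"
    and "separating \<Phi>"
    and "\<And>\<phi>. \<phi> \<in> \<Phi> \<Longrightarrow>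
           C1_with_deriv {a..b} (\<lambda>t. blinfun_apply \<phi> (F t)) (\<lambda>t. blinfun_apply \<phi> (G t))"
  shows "C1_with_deriv {a..b} F G"
proof -
  define H where "H = (\<lambda>u. F a + integral {a..u} G)"
  have dH: "(H has_vector_derivative G t) (at t within {a..b})" if "t \<in> {a..b}" for t
    unfolding H_def
    using has_vector_derivative_add[OF has_vector_derivative_const
        integral_has_vector_derivative[OF assms(1) that]] by simp
  have eq: "F t = H t" if t: "t \<in> {a..b}" for t
  proof (rule ccontr)
    assume ne: "F t \<noteq> H t"
    then have "F t - H t \<noteq> 0" by simp
    with assms(2) obtain \<phi> where \<phi>: "\<phi> \<in> \<Phi>" "blinfun_apply \<phi> (F t - H t) \<noteq> 0"
      unfolding separating_def by blast
    have dF: "((\<lambda>t. blinfun_apply \<phi> (F t)) has_vector_derivative blinfun_apply \<phi> (G s)) (at s within {a..b})"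
      if "s \<in> {a..b}" for s
      using assms(3)[OF \<phi>(1)] that unfolding C1_with_deriv_def by blast
    have dPH: "((\<lambda>t. blinfun_apply \<phi> (H t)) has_vector_derivative blinfun_apply \<phi> (G s)) (at s within {a..b})"
      if "s \<in> {a..b}" for s
      using bounded_linear.has_vector_derivative[OF blinfun.bounded_linear_right dH[OF that]] .
    have "((\<lambda>t. blinfun_apply \<phi> (F t) - blinfun_apply \<phi> (H t)) has_derivative (\<lambda>h. 0)) (at s within {a..b})"
      if "s \<in> {a..b}" for s
      using has_vector_derivative_diff[OF dF[OF that] dPH[OF that]]
      unfolding has_vector_derivative_def by simp
    moreover have cv: "convex {a..b}" by (rule convex_real_interval)
    ultimately obtain c where c: "\<forall>x\<in>{a..b}. blinfun_apply \<phi> (F x) - blinfun_apply \<phi> (H x) = c"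
      using has_derivative_zero_constant[OF cv] by blast
    have "a \<in> {a..b}" using t by auto
    then have "blinfun_apply \<phi> (F a) - blinfun_apply \<phi> (H a) = c" using c by blast
    moreover have "H a = F a" by (simp add: H_def)
    ultimately have "c = 0" by simp
    then show False using c t \<phi>(2) by (simp add: blinfun.diff_right)
  qed
  have "(F has_vector_derivative G t) (at t within {a..b})" if "t \<in> {a..b}" for t
    by (rule has_vector_derivative_transform[OF that eq dH[OF that]])
  then show ?thesis unfolding C1_with_deriv_def using assms(1) by blast
qed

end
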